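(* The zero-error capacity of the $(w,d)$ sliding-window symmetric channel over $\mathbb{Z}_q$ satisfies $$1-\frac{1}{w}\log_q V^w_{2d}(q)\ \le\ C_0\ \le\ 1-\frac{d}{w}\log_q(q-1).$$ Moreover, if $d\ge w/2$ then $C_0=0$.
   Context: $V^n_r(q)=\sum_{i=0}^{\min(r,n)}\binom{n}{i}(q-1)^i$. Integers $w\ge1$, $0\le d\le w$, $q\ge2$. The $(w,d)$ sliding-window symmetric channel has input and output alphabet $\mathbb{Z}_q$; a noise word $v(0:n-1)\in\mathbb{Z}_q^n$ is admissible if for some initial pattern $v(-w:-1)\in\mathbb{Z}_q^w$ every $w$ consecutive entries of $(v(-w),\dots,v(n-1))$ contain at most $d$ nonzero entries; the output is $y(t)=x(t)+v(t)\bmod q$. A zero-error code of length $n$ is a set $\mathcal{F}\subseteq\mathbb{Z}_q^n$ such that no output word can be produced by two distinct codewords under admissible noise; $C_0=\sup_n\sup_{\mathcal{F}}\log_q|\mathcal{F}|/n$. *)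

theory Defs
  imports Complex_Main
begin

definition words :: "nat \<Rightarrow> nat \<Rightarrow> nat list set" where
  "words q n = {xs. length xs = n \<and> set xs \<subseteq> {..<q}}"

definition V :: "nat \<Rightarrow> nat \<Rightarrow> nat \<Rightarrow> nat" where
  "V n r q = (\<Sum>i = 0..min r n. (n choose i) * (q - 1) ^ i)"

definition window_ok :: "nat \<Rightarrow> nat \<Rightarrow> nat list \<Rightarrow> bool" where
  "window_ok w d s = (\<forall>i. i + w \<le> length s \<longrightarrow>
      length (filter (\<lambda>a. a \<noteq> 0) (take w (drop i s))) \<le> d)"

text \<open>Admissible noise word of length n: some initial pattern v(-w..-1) exists.\<close>
definition admissible :: "nat \<Rightarrow> nat \<Rightarrow> nat \<Rightarrow> nat \<Rightarrow> nat list \<Rightarrow> bool" where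
  "admissible q w d n v = (v \<in> words q n \<and>
      (\<exists>u \<in> words q w. window_ok w d (u @ v)))"

definition channel_out :: "nat \<Rightarrow> nat list \<Rightarrow> nat list \<Rightarrow> nat list" where
  "channel_out q x v = map2 (\<lambda>a b. (a + b) mod q) x v"

definition zero_error_code :: "nat \<Rightarrow> nat \<Rightarrow> nat \<Rightarrow> nat \<Rightarrow> nat list set \<Rightarrow> bool" where
  "zero_error_code q w d n F = (F \<subseteq> words q n \<and>
     (\<forall>x1 \<in> F. \<forall>x2 \<in> F. x1 \<noteq> x2 \<longrightarrow>
        \<not> (\<exists>v1 v2. admissible q w d n v1 \<and> admissible q w d n v2 \<and>
              channel_out q x1 v1 = channel_out q x2 v2)))"

definition C0 :: "nat \<Rightarrow> nat \<Rightarrow> nat \<Rightarrow> real" where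
  "C0 q w d = (SUP n \<in> {1..}. SUP F \<in> {F. F \<noteq> {} \<and> zero_error_code q w d n F}.
                  log (real q) (real (card F)) / real n)"

end

theory Submission
  imports Defs
begin

lemma mod_inj_aux:
  assumes "(i+k) mod w = (i+k') mod w" "k < (w::nat)" "k' < w" shows "k = k'"
proof (rule ccontr)
  assume ne: "k \<noteq> k'"
  have "(int i + int k) mod int w = (int i + int k') mod int w"
    using assms(1) by (metis of_nat_add zmod_int)
  then have "int w dvd (int i + int k - (int i + int k'))"
    using mod_eq_dvd_iff by blast
  then have d: "int w dvd (int k - int k')" by simp
  have "int k - int k' \<noteq> 0" using ne by simp
  from dvd_imp_le_int[OF this d] have "\<bar>int w\<bar> \<le> \<bar>int k - int k'\<bar>" .
  then show False using assms(2,3) by linarith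
qed

lemma shift_card:
  assumes "w \<ge> (1::nat)"
  shows "card {k. k<w \<and> P ((i+k) mod w)} = card {m. m<w \<and> P m}"
proof -
  let ?f = "\<lambda>k. (i+k) mod w"
  have inj: "inj_on ?f {..<w}"
  proof (rule inj_onI)
    fix x y assume "x \<in> {..<w}" "y \<in> {..<w}" "(i+x) mod w = (i+y) mod w"
    then show "x = y" using mod_inj_aux[of i x w y] by simp
  qed
  have img: "?f ` {k. k<w \<and> P ((i+k) mod w)} = {m. m<w \<and> P m}"
  proof
    show "?f ` {k. k<w \<and> P ((i+k) mod w)} \<subseteq> {m. m<w \<and> P m}"
    proof
      fix m assume "m \<in> ?f ` {k. k<w \<and> P ((i+k) mod w)}"
      then obtain k where "k<w" "P ((i+k) mod w)" "m = (i+k) mod w" by blast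
      then show "m \<in> {m. m<w \<and> P m}" using assms by simp
    qed
    show "{m. m<w \<and> P m} \<subseteq> ?f ` {k. k<w \<and> P ((i+k) mod w)}"
    proof
      fix m assume m: "m \<in> {m. m<w \<and> P m}"
      define k where "k = (m + (w - i mod w)) mod w"
      have "(i + k) mod w = (i + (m + (w - i mod w))) mod w"
        unfolding k_def by (simp add: mod_add_right_eq)
      also have "i + (m + (w - i mod w)) = (i div w) * w + m + w"
        using assms mod_less_divisor[of w i] div_mult_mod_eq[of i w] by linarith
      also have "((i div w) * w + m + w) mod w = m"
        using m by simp
      finally have "?f k = m" .
      moreover have "k < w" using assms unfolding k_def by simp
      ultimately show "m \<in> ?f ` {k. k<w \<and> P ((i+k) mod w)}"
        using m by (intro image_eqI[where x=k]) simp_all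
    qed
  qed
  have "card {k. k<w \<and> P ((i+k) mod w)} = card (?f ` {k. k<w \<and> P ((i+k) mod w)})"
    by (rule card_image[symmetric], rule inj_on_subset[OF inj], auto)
  then show ?thesis using img by simp
qed

lemma words_replicate: "q \<ge> 1 \<Longrightarrow> replicate n 0 \<in> words q n"
  by (auto simp: words_def)

lemma admissible_intro:
  assumes w: "w \<ge> 1" and v: "v \<in> words q n" and q: "q \<ge> 1"
    and Q: "\<forall>t<n. v!t \<noteq> 0 \<longrightarrow> Q (t mod w)" and c: "card {m. m<w \<and> Q m} \<le> d"
  shows "admissible q w d n v"
  unfolding admissible_def
proof (intro conjI bexI)
  show "v \<in> words q n" by fact
  show "replicate w 0 \<in> words q w" using q by (rule words_replicate)
  let ?s = "replicate w 0 @ v"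
  have lv: "length v = n" using v by (simp add: words_def)
  show "window_ok w d ?s"
    unfolding window_ok_def
  proof (intro allI impI)
    fix i assume i: "i + w \<le> length ?s"
    have len: "length (take w (drop i ?s)) = w" using i by simp
    have "length (filter (\<lambda>a. a \<noteq> 0) (take w (drop i ?s)))
        = card {k. k < w \<and> take w (drop i ?s) ! k \<noteq> 0}"
      unfolding length_filter_conv_card len by (rule refl)
    also have "\<dots> \<le> card {k. k<w \<and> Q ((i+k) mod w)}"
    proof (rule card_mono)
      show "finite {k. k<w \<and> Q ((i+k) mod w)}" by simp
      show "{k. k < w \<and> take w (drop i ?s) ! k \<noteq> 0} \<subseteq> {k. k<w \<and> Q ((i+k) mod w)}"
      proof
        fix k assume "k \<in> {k. k < w \<and> take w (drop i ?s) ! k \<noteq> 0}"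
        then have kk: "k < w \<and> take w (drop i ?s) ! k \<noteq> 0" by (rule CollectD)
        then have k: "k < w" by (rule conjunct1)
        from kk have nz: "take w (drop i ?s) ! k \<noteq> 0" by (rule conjunct2)
        have e: "take w (drop i ?s) ! k = ?s ! (i+k)"
          using k i by (subst nth_take[OF k], subst nth_drop) auto
        have ge: "i + k \<ge> w"
        proof (rule ccontr)
          assume "\<not> w \<le> i + k"
          then have "?s ! (i+k) = 0" by (simp add: nth_append)
          then show False using nz e by simp
        qed
        have "v ! (i+k-w) \<noteq> 0" using nz e ge by (simp add: nth_append)
        moreover have "i + k - w < n" using i k lv ge by simp
        ultimately have "Q ((i+k-w) mod w)" using Q by blast
        moreover have "(i+k-w) mod w = (i+k) mod w"
        proof -
          have "(i+k) mod w = ((i+k-w) + w) mod w" using ge by simp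
          also have "\<dots> = (i+k-w) mod w" by (rule mod_add_self2)
          finally show ?thesis by simp
        qed
        ultimately show "k \<in> {k. k<w \<and> Q ((i+k) mod w)}" using k by simp
      qed
    qed
    also have "\<dots> = card {m. m<w \<and> Q m}" using w by (rule shift_card)
    also have "\<dots> \<le> d" by fact
    finally show "length (filter (\<lambda>a. a \<noteq> 0) (take w (drop i ?s))) \<le> d" .
  qed
qed

lemma card_lessThan_Suc_pred:
  "card {t. t < Suc n \<and> p t} = (if p 0 then 1 else 0) + card {t. t < n \<and> p (Suc t)}"
proof -
  have e: "{t. t < Suc n \<and> p t} = (if p 0 then {0} else {}) \<union> Suc ` {t. t < n \<and> p (Suc t)}"
    by (auto simp: less_Suc_eq_0_disj)
  have "card ((if p 0 then {0} else {}) \<union> Suc ` {t. t < n \<and> p (Suc t)})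
      = card (if p 0 then {0::nat} else {}) + card (Suc ` {t. t < n \<and> p (Suc t)})"
    by (rule card_Un_disjoint) auto
  also have "card (Suc ` {t. t < n \<and> p (Suc t)}) = card {t. t < n \<and> p (Suc t)}"
    by (simp add: card_image)
  finally show ?thesis using e by simp
qed

lemma card_support:
  assumes q: "q \<ge> (1::nat)"
  shows "card {v. length v = n \<and> (\<forall>t<n. v!t < q \<and> (\<not> p t \<longrightarrow> v!t = 0))}
         = q ^ card {t. t<n \<and> p t}"
  using q
proof (induction n arbitrary: p)
  case 0
  then show ?case by simp
next
  case (Suc n)
  define A where "A = {a. a < q \<and> (\<not> p 0 \<longrightarrow> a = 0)}"
  define B where "B = {v. length v = n \<and> (\<forall>t<n. v!t < q \<and> (\<not> p (Suc t) \<longrightarrow> v!t = 0))}"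
  have e: "{v. length v = Suc n \<and> (\<forall>t<Suc n. v!t < q \<and> (\<not> p t \<longrightarrow> v!t = 0))}
        = (\<lambda>(a,v). a # v) ` (A \<times> B)"
  proof
    show "{v. length v = Suc n \<and> (\<forall>t<Suc n. v!t < q \<and> (\<not> p t \<longrightarrow> v!t = 0))}
        \<subseteq> (\<lambda>(a,v). a # v) ` (A \<times> B)"
    proof
      fix v assume v: "v \<in> {v. length v = Suc n \<and> (\<forall>t<Suc n. v!t < q \<and> (\<not> p t \<longrightarrow> v!t = 0))}"
      then obtain a v' where av: "v = a # v'" by (cases v) auto
      have "a \<in> A" using v av unfolding A_def by (auto dest: spec[of _ 0])
      moreover have "v' \<in> B" using v av unfolding B_def by (auto dest: spec[of _ "Suc _"])
      ultimately show "v \<in> (\<lambda>(a,v). a # v) ` (A \<times> B)" using av by force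
    qed
    show "(\<lambda>(a,v). a # v) ` (A \<times> B)
        \<subseteq> {v. length v = Suc n \<and> (\<forall>t<Suc n. v!t < q \<and> (\<not> p t \<longrightarrow> v!t = 0))}"
      unfolding A_def B_def by (auto simp: less_Suc_eq_0_disj)
  qed
  have inj: "inj_on (\<lambda>(a,v). a # v) (A \<times> B)" by (auto simp: inj_on_def)
  have cA: "card A = (if p 0 then q else 1)"
  proof (cases "p 0")
    case True then show ?thesis unfolding A_def by simp
  next
    case False
    then have "A = {0}" unfolding A_def using Suc.prems by auto
    then show ?thesis using False by simp
  qed
  have cB: "card B = q ^ card {t. t<n \<and> p (Suc t)}"
    unfolding B_def using Suc.IH[of "\<lambda>t. p (Suc t)"] Suc.prems by simp
  have "card {v. length v = Suc n \<and> (\<forall>t<Suc n. v!t < q \<and> (\<not> p t \<longrightarrow> v!t = 0))}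
      = card A * card B"
    unfolding e by (simp add: card_image[OF inj] card_cartesian_product)
  also have "\<dots> = q ^ card {t. t<Suc n \<and> p t}"
    unfolding cA cB card_lessThan_Suc_pred by simp
  finally show ?case .
qed

lemma card_window_block:
  assumes "w \<ge> 1" "d \<le> w"
  shows "card {t. t < n + w \<and> t mod w < d} = card {t. t < n \<and> t mod w < d} + d"
proof -
  have e: "{t. t < n + w \<and> t mod w < d} = {t. t < n \<and> t mod w < d} \<union> (\<lambda>k. n + k) ` {k. k < w \<and> (n+k) mod w < d}"
  proof (rule set_eqI, rule iffI)
    fix t assume t: "t \<in> {t. t < n + w \<and> t mod w < d}"
    show "t \<in> {t. t < n \<and> t mod w < d} \<union> (\<lambda>k. n + k) ` {k. k < w \<and> (n+k) mod w < d}"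
    proof (cases "t < n")
      case True then show ?thesis using t by auto
    next
      case False
      then have "t = n + (t - n)" by simp
      then show ?thesis using t False by (auto intro!: image_eqI[where x="t - n"])
    qed
  qed auto
  have "card {t. t < n + w \<and> t mod w < d} = card {t. t < n \<and> t mod w < d} + card ((\<lambda>k. n + k) ` {k. k < w \<and> (n+k) mod w < d})"
    unfolding e by (rule card_Un_disjoint) auto
  also have "card ((\<lambda>k. n + k) ` {k. k < w \<and> (n+k) mod w < d}) = card {k. k < w \<and> (n+k) mod w < d}"
    by (simp add: card_image)
  also have "\<dots> = card {m. m < w \<and> m < d}" using assms(1) by (rule shift_card)
  also have "{m. m < w \<and> m < d} = {..<d}" using assms(2) by auto
  finally show ?thesis by simp
qed

lemma card_window_lower:
  assumes "w \<ge> 1" "d \<le> w"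
  shows "n * d \<le> card {t. t < n \<and> t mod w < d} * w"
proof (induction n rule: less_induct)
  case (less n)
  show ?case
  proof (cases "n < w")
    case True
    then have "{t. t < n \<and> t mod w < d} = {..<min n d}" by auto
    then have "card {t. t < n \<and> t mod w < d} = min n d" by simp
    moreover have "n * d \<le> min n d * w"
    proof (cases "n \<le> d")
      case True
      then show ?thesis using assms(2) by (simp add: min_def)
    next
      case False
      then have "min n d = d" by simp
      moreover have "n * d \<le> w * d" using \<open>n < w\<close> by simp
      ultimately show ?thesis by (simp add: mult.commute)
    qed
    ultimately show ?thesis by simp
  next
    case False
    then obtain m where m: "n = m + w" by (metis add.commute le_add_diff_inverse not_less)
    have "m < n" using m assms by simp
    from less.IH[OF this] have "m * d \<le> card {t. t < m \<and> t mod w < d} * w" .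
    then show ?thesis unfolding m card_window_block[OF assms] by (simp add: algebra_simps)
  qed
qed

lemma words_eq: "words q n = {xs. set xs \<subseteq> {..<q} \<and> length xs = n}"
  by (auto simp: words_def)

lemma finite_words: "finite (words q n)"
  unfolding words_eq by (rule finite_lists_length_eq) simp

lemma card_words: "card (words q n) = q ^ n"
  unfolding words_eq by (subst card_lists_length_eq) simp_all

lemma words_nth: "xs \<in> words q n \<longleftrightarrow> length xs = n \<and> (\<forall>t<n. xs!t < q)"
  by (auto simp: words_def set_conv_nth)

lemma channel_out_nth:
  "t < length x \<Longrightarrow> t < length v \<Longrightarrow> channel_out q x v ! t = (x!t + v!t) mod q"
  by (simp add: channel_out_def)

lemma channel_out_words:
  assumes "q \<ge> 1" "x \<in> words q n" "v \<in> words q n"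
  shows "channel_out q x v \<in> words q n"
  using assms by (auto simp: words_nth channel_out_def)

lemma code_card_bound:
  assumes w: "w \<ge> 1" and dw: "d \<le> w" and q: "q \<ge> 1"
    and F: "zero_error_code q w d n F"
  shows "card F * q ^ card {t. t<n \<and> t mod w < d} \<le> q ^ n"
proof -
  define S where "S = {v. length v = n \<and> (\<forall>t<n. v!t < q \<and> (\<not> t mod w < d \<longrightarrow> v!t = 0))}"
  have cS: "card S = q ^ card {t. t<n \<and> t mod w < d}"
    unfolding S_def using card_support[OF q, of n "\<lambda>t. t mod w < d"] by simp
  have Sw: "S \<subseteq> words q n" unfolding S_def by (auto simp: words_nth)
  have cm: "card {m. m<w \<and> m < d} \<le> d"
  proof -
    have "{m. m<w \<and> m < d} = {..<d}" using dw by auto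
    then show ?thesis by simp
  qed
  have Sadm: "admissible q w d n v" if "v \<in> S" for v
  proof (rule admissible_intro[OF w _ q _ cm])
    show "v \<in> words q n" using that Sw by blast
    show "\<forall>t<n. v ! t \<noteq> 0 \<longrightarrow> t mod w < d" using that unfolding S_def by auto
  qed
  have FW: "F \<subseteq> words q n" using F unfolding zero_error_code_def by blast
  define g where "g = (\<lambda>(x,v). channel_out q x v)"
  have inj: "inj_on g (F \<times> S)"
  proof (rule inj_onI)
    fix a b assume a: "a \<in> F \<times> S" and b: "b \<in> F \<times> S" and e: "g a = g b"
    obtain x1 v1 where a1: "a = (x1,v1)" by (cases a)
    obtain x2 v2 where b1: "b = (x2,v2)" by (cases b)
    have x1: "x1 \<in> F" and v1: "v1 \<in> S" using a a1 by auto
    have x2: "x2 \<in> F" and v2: "v2 \<in> S" using b b1 by auto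
    have eq: "channel_out q x1 v1 = channel_out q x2 v2" using e a1 b1 g_def by simp
    have xx: "x1 = x2"
    proof (rule ccontr)
      assume "x1 \<noteq> x2"
      then show False using F x1 x2 Sadm[OF v1] Sadm[OF v2] eq
        unfolding zero_error_code_def by blast
    qed
    have l1: "length x1 = n" "length v1 = n" "length v2 = n"
      using x1 FW v1 v2 Sw by (auto simp: words_nth)
    have "v1 = v2"
    proof (rule nth_equalityI)
      show "length v1 = length v2" using l1 by simp
      fix t assume t: "t < length v1"
      have "(x1!t + v1!t) mod q = (x1!t + v2!t) mod q"
        using eq xx t l1 channel_out_nth[of t x1 v1 q] channel_out_nth[of t x1 v2 q] by simp
      moreover have "v1!t < q" "v2!t < q" using v1 v2 t l1 unfolding S_def by auto
      ultimately show "v1!t = v2!t" by (rule mod_inj_aux)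
    qed
    then show "a = b" using a1 b1 xx by simp
  qed
  have img: "g ` (F \<times> S) \<subseteq> words q n"
    using FW Sw q channel_out_words unfolding g_def by fastforce
  have "card F * card S = card (F \<times> S)" by (simp add: card_cartesian_product)
  also have "\<dots> = card (g ` (F \<times> S))" by (rule card_image[symmetric, OF inj])
  also have "\<dots> \<le> card (words q n)" by (rule card_mono[OF finite_words img])
  finally show ?thesis using cS card_words by simp
qed

lemma mod_aux1: assumes "a < q" "b < (q::nat)" shows "(a + (b+q-a) mod q) mod q = b"
proof -
  have "(a + (b+q-a) mod q) mod q = (a + (b+q-a)) mod q" by (rule mod_add_right_eq)
  also have "a + (b+q-a) = b + q" using assms by simp
  also have "(b + q) mod q = b" using assms by simp
  finally show ?thesis .
qed
lemma mod_aux2: assumes "a < q" "b < (q::nat)" shows "(b + (q - (b+q-a) mod q) mod q) mod q = a"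
proof (cases "a \<le> b")
  case True
  then have "b + q - a = (b - a) + q" by simp
  then have "(b+q-a) mod q = ((b - a) + q) mod q" by (rule arg_cong)
  also have "\<dots> = (b - a) mod q" by (rule mod_add_self2)
  also have "\<dots> = b - a" using assms by (intro mod_less) linarith
  finally have e: "(b+q-a) mod q = b - a" .
  show ?thesis
  proof (cases "a = b")
    case True then show ?thesis unfolding e using assms by simp
  next
    case False
    then have m: "(q - (b - a)) mod q = q - (b - a)" using \<open>a \<le> b\<close> assms by (intro mod_less) linarith
    have "b + (q - (b - a)) = a + q" using \<open>a \<le> b\<close> assms by linarith
    then show ?thesis unfolding e m using assms by simp
  qed
next
  case False
  then have e: "(b+q-a) mod q = b + q - a" using assms by (intro mod_less) linarith
  have m: "q - (b + q - a) = a - b" using False assms by linarith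
  have m2: "(a - b) mod q = a - b" using assms by (intro mod_less) linarith
  have "b + (a - b) = a" using False by simp
  then show ?thesis unfolding e m m2 using assms by simp
qed

lemma code_trivial:
  assumes w: "w \<ge> 1" and dw: "d \<le> w" and wd: "w \<le> 2 * d" and q: "q \<ge> 1"
    and F: "zero_error_code q w d n F"
  shows "card F \<le> 1"
proof -
  have FW: "F \<subseteq> words q n" using F unfolding zero_error_code_def by blast
  have fin: "finite F" using FW finite_words finite_subset by blast
  have "x1 = x2" if x1: "x1 \<in> F" and x2: "x2 \<in> F" for x1 x2
  proof (rule ccontr)
    assume ne: "x1 \<noteq> x2"
    have l: "length x1 = n" "length x2 = n" and lt: "\<forall>t<n. x1!t < q" "\<forall>t<n. x2!t < q"
      using x1 x2 FW by (auto simp: words_nth)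
    define e where "e = (\<lambda>t. (x2!t + q - x1!t) mod q)"
    define v1 where "v1 = map (\<lambda>t. if t mod w < d then e t else 0) [0..<n]"
    define v2 where "v2 = map (\<lambda>t. if t mod w < d then 0 else (q - e t) mod q) [0..<n]"
    have qp: "q > 0" using q by simp
    have v1w: "v1 \<in> words q n" unfolding words_nth v1_def e_def using qp by auto
    have v2w: "v2 \<in> words q n" unfolding words_nth v2_def using qp by auto
    have c1: "card {m. m<w \<and> m < d} \<le> d"
    proof -
      have "{m. m<w \<and> m < d} = {..<d}" using dw by auto
      then show ?thesis by simp
    qed
    have c2: "card {m. m<w \<and> \<not> m < d} \<le> d"
    proof -
      have "{m. m<w \<and> \<not> m < d} = {d..<w}" by auto
      then show ?thesis using wd by simp
    qed
    have a1: "admissible q w d n v1"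
      by (rule admissible_intro[OF w v1w q _ c1]) (auto simp: v1_def)
    have a2: "admissible q w d n v2"
      by (rule admissible_intro[OF w v2w q _ c2]) (auto simp: v2_def)
    have "channel_out q x1 v1 = channel_out q x2 v2"
    proof (rule nth_equalityI)
      show "length (channel_out q x1 v1) = length (channel_out q x2 v2)"
        using l by (simp add: channel_out_def v1_def v2_def)
      fix t assume "t < length (channel_out q x1 v1)"
      then have t: "t < n" using l by (simp add: channel_out_def v1_def)
      have lv: "length v1 = n" "length v2 = n" by (simp_all add: v1_def v2_def)
      have A: "x1!t < q" "x2!t < q" using lt t by auto
      show "channel_out q x1 v1 ! t = channel_out q x2 v2 ! t"
      proof (cases "t mod w < d")
        case True
        have "channel_out q x1 v1 ! t = (x1!t + e t) mod q"
          using t l lv True by (simp add: channel_out_nth v1_def)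
        also have "\<dots> = x2!t" unfolding e_def using A by (rule mod_aux1)
        also have "\<dots> = channel_out q x2 v2 ! t"
          using t l lv True A by (simp add: channel_out_nth v2_def)
        finally show ?thesis .
      next
        case False
        have "channel_out q x2 v2 ! t = (x2!t + (q - e t) mod q) mod q"
          using t l lv False by (simp add: channel_out_nth v2_def)
        also have "\<dots> = x1!t" unfolding e_def using A by (rule mod_aux2)
        also have "\<dots> = channel_out q x1 v1 ! t"
          using t l lv False A by (simp add: channel_out_nth v1_def)
        finally show ?thesis by simp
      qed
    qed
    then show False using F x1 x2 ne a1 a2 unfolding zero_error_code_def by blast
  qed
  then show ?thesis using fin by (simp add: card_le_Suc0_iff_eq)
qed

fun hdist :: "nat list \<Rightarrow> nat list \<Rightarrow> nat" where
  "hdist (a#xs) (b#ys) = (if a = b then 0 else 1) + hdist xs ys"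
| "hdist _ _ = 0"

lemma hdist_sym: "hdist x y = hdist y x"
  by (induction x y rule: hdist.induct) auto

lemma hdist_self: "hdist x x = 0"
  by (induction x) auto

lemma hdist_noise:
  assumes "length x1 = length x2" "length x2 = length v1" "length v1 = length v2"
    and "\<forall>a\<in>set x1. a < q" "\<forall>a\<in>set x2. a < q"
    and "channel_out q x1 v1 = channel_out q x2 v2"
  shows "hdist x1 x2 \<le> length (filter (\<lambda>a. a \<noteq> 0) v1) + length (filter (\<lambda>a. a \<noteq> 0) v2)"
  using assms
proof (induction x1 x2 v1 v2 rule: list_induct4)
  case Nil
  then show ?case by simp
next
  case (Cons a1 x1 a2 x2 b1 v1 b2 v2)
  have co: "(a1 + b1) mod q = (a2 + b2) mod q" "channel_out q x1 v1 = channel_out q x2 v2"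
    using Cons.prems by (simp_all add: channel_out_def)
  have IH: "hdist x1 x2 \<le> length (filter (\<lambda>a. a \<noteq> 0) v1) + length (filter (\<lambda>a. a \<noteq> 0) v2)"
    using Cons.IH Cons.prems co(2) by simp
  have "a1 \<noteq> a2 \<Longrightarrow> b1 \<noteq> 0 \<or> b2 \<noteq> 0"
  proof (rule ccontr)
    assume "a1 \<noteq> a2" "\<not> (b1 \<noteq> 0 \<or> b2 \<noteq> 0)"
    then have "a1 mod q = a2 mod q" using co(1) by simp
    moreover have "a1 < q" "a2 < q" using Cons.prems by auto
    ultimately show False using \<open>a1 \<noteq> a2\<close> by simp
  qed
  then show ?case using IH by auto
qed

lemma admissible_weight:
  assumes "admissible q w d w v"
  shows "length (filter (\<lambda>a. a \<noteq> 0) v) \<le> d"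
proof -
  obtain u where u: "u \<in> words q w" and ok: "window_ok w d (u @ v)" and v: "v \<in> words q w"
    using assms unfolding admissible_def by blast
  have lu: "length u = w" and lv: "length v = w" using u v by (auto simp: words_def)
  have "take w (drop w (u @ v)) = v" using lu lv by simp
  moreover have "w + w \<le> length (u @ v)" using lu lv by simp
  ultimately show ?thesis using ok unfolding window_ok_def by metis
qed

lemma zero_error_from_dist:
  assumes F: "F \<subseteq> words q w" and far: "\<forall>x1\<in>F. \<forall>x2\<in>F. x1 \<noteq> x2 \<longrightarrow> 2 * d < hdist x1 x2"
  shows "zero_error_code q w d w F"
  unfolding zero_error_code_def
proof (intro conjI F ballI impI notI)
  fix x1 x2 assume x1: "x1 \<in> F" and x2: "x2 \<in> F" and ne: "x1 \<noteq> x2"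
  assume "\<exists>v1 v2. admissible q w d w v1 \<and> admissible q w d w v2 \<and>
              channel_out q x1 v1 = channel_out q x2 v2"
  then obtain v1 v2 where a1: "admissible q w d w v1" and a2: "admissible q w d w v2"
    and e: "channel_out q x1 v1 = channel_out q x2 v2" by blast
  have w1: "x1 \<in> words q w" "x2 \<in> words q w" using x1 x2 F by auto
  have w2: "v1 \<in> words q w" "v2 \<in> words q w" using a1 a2 by (auto simp: admissible_def)
  have "hdist x1 x2 \<le> length (filter (\<lambda>a. a \<noteq> 0) v1) + length (filter (\<lambda>a. a \<noteq> 0) v2)"
    by (rule hdist_noise) (use w1 w2 e in \<open>auto simp: words_def\<close>)
  also have "\<dots> \<le> 2 * d" using admissible_weight[OF a1] admissible_weight[OF a2] by simp
  finally show False using far x1 x2 ne by force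
qed

definition Vs :: "nat \<Rightarrow> nat \<Rightarrow> nat \<Rightarrow> nat" where
  "Vs q n r = (\<Sum>i\<le>r. (n choose i) * (q - 1) ^ i)"

lemma Vs_0: "Vs q 0 r = 1"
  unfolding Vs_def by (induction r) auto

lemma Vs_Suc0: "Vs q n 0 = 1"
  unfolding Vs_def by simp

lemma pascal_sum:
  "(\<Sum>i\<le>r. (Suc n choose Suc i) * (c::nat) ^ Suc i)
      = (\<Sum>i\<le>r. (n choose Suc i) * c ^ Suc i) + c * (\<Sum>i\<le>r. (n choose i) * c ^ i)"
proof -
  have "(\<Sum>i\<le>r. (Suc n choose Suc i) * c ^ Suc i)
      = (\<Sum>i\<le>r. (n choose Suc i) * c ^ Suc i + c * ((n choose i) * c ^ i))"
    by (rule sum.cong) (simp_all add: algebra_simps)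
  also have "\<dots> = (\<Sum>i\<le>r. (n choose Suc i) * c ^ Suc i) + c * (\<Sum>i\<le>r. (n choose i) * c ^ i)"
    by (simp add: sum.distrib sum_distrib_left)
  finally show ?thesis .
qed

lemma Vs_Suc_Suc: "Vs q (Suc n) (Suc r) = Vs q n (Suc r) + (q - 1) * Vs q n r"
proof -
  let ?c = "q - 1"
  have "Vs q (Suc n) (Suc r) = 1 + (\<Sum>i\<le>r. (Suc n choose Suc i) * ?c ^ Suc i)"
    unfolding Vs_def by (subst sum.atMost_Suc_shift) simp
  also have "(\<Sum>i\<le>r. (Suc n choose Suc i) * ?c ^ Suc i)
      = (\<Sum>i\<le>r. (n choose Suc i) * ?c ^ Suc i) + ?c * (\<Sum>i\<le>r. (n choose i) * ?c ^ i)"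
    by (rule pascal_sum)
  also have "Vs q n (Suc r) = 1 + (\<Sum>i\<le>r. (n choose Suc i) * ?c ^ Suc i)"
    unfolding Vs_def by (subst sum.atMost_Suc_shift) simp
  ultimately show ?thesis unfolding Vs_def by simp
qed

lemma Vs_eq_V: "Vs q n r = V n r q"
proof -
  have "(\<Sum>i\<le>r. (n choose i) * (q - 1) ^ i) = (\<Sum>i = 0..min r n. (n choose i) * (q - 1) ^ i)"
    by (rule sum.mono_neutral_right) auto
  then show ?thesis unfolding Vs_def V_def .
qed

lemma ball_bound:
  assumes q: "q \<ge> 1"
  shows "x \<in> words q n \<Longrightarrow> card {y \<in> words q n. hdist x y \<le> r} \<le> Vs q n r"
proof (induction n arbitrary: x r)
  case 0
  then have "{y \<in> words q 0. hdist x y \<le> r} \<subseteq> {[]}" by (auto simp: words_def)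
  then have "card {y \<in> words q 0. hdist x y \<le> r} \<le> card {[]::nat list}"
    by (rule card_mono[rotated]) simp
  then have "card {y \<in> words q 0. hdist x y \<le> r} \<le> 1" by simp
  then show ?case by (simp add: Vs_0)
next
  case (Suc n)
  obtain a x' where x: "x = a # x'" using Suc.prems by (cases x) (auto simp: words_def)
  have a: "a < q" and x': "x' \<in> words q n" using Suc.prems x by (auto simp: words_def)
  define B where "B = (\<lambda>r. {y \<in> words q n. hdist x' y \<le> r})"
  have finB: "finite (B r)" for r unfolding B_def using finite_words by simp
  have IH: "card (B r) \<le> Vs q n r" for r unfolding B_def using Suc.IH[OF x'] .
  show ?case
  proof (cases r)
    case 0
    have "{y \<in> words q (Suc n). hdist x y \<le> r} \<subseteq> (\<lambda>y. a # y) ` B 0"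
    proof
      fix y assume y: "y \<in> {y \<in> words q (Suc n). hdist x y \<le> r}"
      then obtain b y' where yy: "y = b # y'" by (cases y) (auto simp: words_def)
      have "b = a" and "y' \<in> B 0" using y yy x 0 by (auto simp: B_def words_def split: if_splits)
      then show "y \<in> (\<lambda>y. a # y) ` B 0" using yy by blast
    qed
    then have "card {y \<in> words q (Suc n). hdist x y \<le> r} \<le> card ((\<lambda>y. a # y) ` B 0)"
      by (rule card_mono[rotated]) (use finB in simp)
    also have "\<dots> \<le> card (B 0)" by (rule card_image_le[OF finB])
    also have "\<dots> \<le> Vs q n 0" by (rule IH)
    finally show ?thesis using 0 by (simp add: Vs_Suc0)
  next
    case (Suc r')
    have sub: "{y \<in> words q (Suc n). hdist x y \<le> r} \<subseteq>
        (\<lambda>y. a # y) ` B r \<union> (\<Union>b\<in>{..<q} - {a}. (\<lambda>y. b # y) ` B r')"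
    proof
      fix y assume y: "y \<in> {y \<in> words q (Suc n). hdist x y \<le> r}"
      then obtain b y' where yy: "y = b # y'" by (cases y) (auto simp: words_def)
      have bq: "b < q" and y': "y' \<in> words q n" using y yy by (auto simp: words_def)
      show "y \<in> (\<lambda>y. a # y) ` B r \<union> (\<Union>b\<in>{..<q} - {a}. (\<lambda>y. b # y) ` B r')"
      proof (cases "b = a")
        case True
        then have "y' \<in> B r" using y yy x y' by (auto simp: B_def)
        then show ?thesis using yy True by blast
      next
        case False
        then have "y' \<in> B r'" using y yy x y' Suc by (auto simp: B_def)
        then show ?thesis using yy False bq by blast
      qed
    qed
    have "card {y \<in> words q (Suc n). hdist x y \<le> r}
        \<le> card ((\<lambda>y. a # y) ` B r \<union> (\<Union>b\<in>{..<q} - {a}. (\<lambda>y. b # y) ` B r'))"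
      by (rule card_mono[OF _ sub]) (use finB in simp)
    also have "\<dots> \<le> card ((\<lambda>y. a # y) ` B r) + card (\<Union>b\<in>{..<q} - {a}. (\<lambda>y. b # y) ` B r')"
      by (rule card_Un_le)
    also have "card ((\<lambda>y. a # y) ` B r) \<le> Vs q n r"
      using card_image_le[OF finB, of "\<lambda>y. a # y" r] IH[of r] by linarith
    also have "card (\<Union>b\<in>{..<q} - {a}. (\<lambda>y. b # y) ` B r') \<le> (\<Sum>b\<in>{..<q} - {a}. card ((\<lambda>y. b # y) ` B r'))"
      by (rule card_UN_le) simp
    also have "\<dots> \<le> (\<Sum>b\<in>{..<q} - {a}. Vs q n r')"
    proof (rule sum_mono)
      fix b show "card ((\<lambda>y. b # y) ` B r') \<le> Vs q n r'"
        using card_image_le[OF finB, of "\<lambda>y. b # y" r'] IH[of r'] by linarith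
    qed
    also have "\<dots> = (q - 1) * Vs q n r'" using a by simp
    finally show ?thesis using Suc by (simp add: Vs_Suc_Suc)
  qed
qed

lemma GV_code:
  assumes q: "q \<ge> 1"
  shows "\<exists>F. zero_error_code q w d w F \<and> q ^ w \<le> card F * V w (2 * d) q"
proof -
  define P where "P = (\<lambda>F. F \<subseteq> words q w \<and> (\<forall>x1\<in>F. \<forall>x2\<in>F. x1 \<noteq> x2 \<longrightarrow> 2 * d < hdist x1 x2))"
  have P0: "P {}" unfolding P_def by simp
  have bnd: "\<forall>F. P F \<longrightarrow> card F < q ^ w + 1"
  proof (intro allI impI)
    fix F assume "P F"
    then have "F \<subseteq> words q w" unfolding P_def by blast
    then have "card F \<le> card (words q w)" by (rule card_mono[OF finite_words])
    then show "card F < q ^ w + 1" by (simp add: card_words)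
  qed
  obtain F where PF: "P F" and mx: "\<forall>G. P G \<longrightarrow> card G \<le> card F"
    using Lattices_Big.ex_has_greatest_nat[of P "{}" card, OF P0 bnd] by blast
  have FW: "F \<subseteq> words q w" and far: "\<forall>x1\<in>F. \<forall>x2\<in>F. x1 \<noteq> x2 \<longrightarrow> 2 * d < hdist x1 x2"
    using PF unfolding P_def by auto
  have finF: "finite F" using FW finite_words finite_subset by blast
  have cover: "words q w \<subseteq> (\<Union>x\<in>F. {y \<in> words q w. hdist x y \<le> 2 * d})"
  proof
    fix y assume y: "y \<in> words q w"
    show "y \<in> (\<Union>x\<in>F. {y \<in> words q w. hdist x y \<le> 2 * d})"
    proof (rule ccontr)
      assume nc: "y \<notin> (\<Union>x\<in>F. {y \<in> words q w. hdist x y \<le> 2 * d})"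
      then have yF: "y \<notin> F" using y hdist_self[of y] by force
      have "P (insert y F)"
        unfolding P_def
      proof (intro conjI ballI impI)
        show "insert y F \<subseteq> words q w" using FW y by blast
        fix x1 x2 assume x1: "x1 \<in> insert y F" and x2: "x2 \<in> insert y F" and ne: "x1 \<noteq> x2"
        have "2 * d < hdist x y" if "x \<in> F" for x using nc y that by force
        then show "2 * d < hdist x1 x2"
          using x1 x2 ne far hdist_sym by (metis insert_iff)
      qed
      then have "card (insert y F) \<le> card F" using mx by blast
      then show False using yF finF by simp
    qed
  qed
  have "q ^ w = card (words q w)" by (simp add: card_words)
  also have "\<dots> \<le> card (\<Union>x\<in>F. {y \<in> words q w. hdist x y \<le> 2 * d})"
    by (rule card_mono[OF _ cover]) (use finF finite_words in simp)
  also have "\<dots> \<le> (\<Sum>x\<in>F. card {y \<in> words q w. hdist x y \<le> 2 * d})"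
    by (rule card_UN_le[OF finF])
  also have "\<dots> \<le> (\<Sum>x\<in>F. V w (2 * d) q)"
  proof (rule sum_mono)
    fix x assume "x \<in> F"
    then have "x \<in> words q w" using FW by blast
    from ball_bound[OF q this] show "card {y \<in> words q w. hdist x y \<le> 2 * d} \<le> V w (2 * d) q"
      by (simp add: Vs_eq_V)
  qed
  also have "\<dots> = card F * V w (2 * d) q" by simp
  finally have "q ^ w \<le> card F * V w (2 * d) q" .
  moreover have "zero_error_code q w d w F" by (rule zero_error_from_dist[OF FW far])
  ultimately show ?thesis by blast
qed

lemma code_basic:
  assumes "zero_error_code q w d n F" "F \<noteq> {}"
  shows "finite F" "1 \<le> card F" "card F \<le> q ^ n"
proof -
  have FW: "F \<subseteq> words q n" using assms unfolding zero_error_code_def by blast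
  show fin: "finite F" using FW finite_words finite_subset by blast
  show "1 \<le> card F" using fin assms(2) by (simp add: Suc_le_eq card_gt_0_iff)
  show "card F \<le> q ^ n" using card_mono[OF finite_words FW] by (simp add: card_words)
qed

lemma val_le_1:
  assumes "q \<ge> 2" "n \<ge> 1" "zero_error_code q w d n F" "F \<noteq> {}"
  shows "log (real q) (real (card F)) / real n \<le> 1"
proof -
  have c1: "1 \<le> card F" and c2: "card F \<le> q ^ n" using code_basic[OF assms(3,4)] by auto
  have qr: "real q > 1" using assms(1) by simp
  have "log (real q) (real (card F)) \<le> log (real q) (real q ^ n)"
    using c1 c2 qr by (subst log_le_cancel_iff) (auto simp flip: of_nat_power)
  also have "\<dots> = real n" using qr by (simp add: log_nat_power)
  finally show ?thesis using assms(2) by simp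
qed

lemma val_ge_0:
  assumes "q \<ge> 2" "zero_error_code q w d n F" "F \<noteq> {}"
  shows "0 \<le> log (real q) (real (card F)) / real n"
proof -
  have c1: "1 \<le> card F" using code_basic[OF assms(2,3)] by auto
  have "0 \<le> log (real q) (real (card F))" using c1 assms(1) by simp
  then show ?thesis by simp
qed

lemma val_upper:
  assumes w: "w \<ge> 1" and dw: "d \<le> w" and q: "q \<ge> 2" and n: "n \<ge> 1"
    and F: "zero_error_code q w d n F" "F \<noteq> {}"
  shows "log (real q) (real (card F)) / real n \<le> 1 - real d / real w * log (real q) (real q - 1)"
proof -
  define c where "c = card {t. t<n \<and> t mod w < d}"
  have cb: "card F * q ^ c \<le> q ^ n" unfolding c_def using code_card_bound[OF w dw _ F(1)] q by simp
  have cw: "n * d \<le> c * w" unfolding c_def by (rule card_window_lower[OF w dw])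
  have c1: "1 \<le> card F" using code_basic[OF F] by auto
  have qr: "real q > 1" using q by simp
  have cbr: "real (card F) * real q ^ c \<le> real q ^ n"
    using cb by (metis of_nat_le_iff of_nat_mult of_nat_power)
  have "log (real q) (real (card F)) + real c = log (real q) (real (card F) * real q ^ c)"
    using qr c1 by (simp add: log_mult log_nat_power)
  also have "\<dots> \<le> log (real q) (real q ^ n)"
    using cbr qr c1 by (subst log_le_cancel_iff) auto
  also have "\<dots> = real n" using qr by (simp add: log_nat_power)
  finally have lg: "log (real q) (real (card F)) \<le> real n - real c" by simp
  have L0: "0 \<le> log (real q) (real q - 1)" using q qr by simp
  have L1: "log (real q) (real q - 1) \<le> 1"
  proof -
    have "log (real q) (real q - 1) \<le> log (real q) (real q)" using q qr by (subst log_le_cancel_iff) auto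
    then show ?thesis using qr by simp
  qed
  have np: "real n > 0" and wp: "real w > 0" using n w by auto
  have cwr: "real n * real d \<le> real c * real w" using cw by (metis of_nat_le_iff of_nat_mult)
  have "real d / real w \<le> real c / real n" using cwr np wp by (simp add: field_simps)
  have "log (real q) (real (card F)) / real n \<le> (real n - real c) / real n"
    using lg np by (simp add: divide_right_mono)
  also have "\<dots> = 1 - real c / real n" using np by (simp add: field_simps)
  also have "\<dots> \<le> 1 - real d / real w" using \<open>real d / real w \<le> real c / real n\<close> by simp
  also have "\<dots> \<le> 1 - real d / real w * log (real q) (real q - 1)"
  proof -
    have "real d / real w * log (real q) (real q - 1) \<le> real d / real w * 1"
      using L1 wp by (intro mult_left_mono) auto
    then show ?thesis by simp
  qed
  finally show ?thesis .
qed

lemma val_lower: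
  assumes q: "q \<ge> 2" and w: "w \<ge> 1"
  shows "\<exists>F. zero_error_code q w d w F \<and> F \<noteq> {} \<and>
     1 - log (real q) (real (V w (2 * d) q)) / real w \<le> log (real q) (real (card F)) / real w"
proof -
  obtain F where F: "zero_error_code q w d w F" and gv: "q ^ w \<le> card F * V w (2 * d) q"
    using GV_code[of q w d] q by auto
  have qr: "real q > 1" using q by simp
  have V1: "V w (2 * d) q \<ge> 1" unfolding V_def by (rule order_trans[OF _ member_le_sum[of 0]]) auto
  have "0 < q ^ w" using q by simp
  then have cF: "card F > 0" using gv by (metis gr0I mult_is_0 not_le)
  then have Fne: "F \<noteq> {}" by auto
  have gvr: "real q ^ w \<le> real (card F) * real (V w (2 * d) q)"
    using gv by (metis of_nat_le_iff of_nat_mult of_nat_power)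
  have "real w = log (real q) (real q ^ w)" using qr by (simp add: log_nat_power)
  also have "\<dots> \<le> log (real q) (real (card F) * real (V w (2 * d) q))"
    using gvr qr cF V1 by (subst log_le_cancel_iff) auto
  also have "\<dots> = log (real q) (real (card F)) + log (real q) (real (V w (2 * d) q))"
    using qr cF V1 by (simp add: log_mult)
  finally have "real w - log (real q) (real (V w (2 * d) q)) \<le> log (real q) (real (card F))" by simp
  then have "(real w - log (real q) (real (V w (2 * d) q))) / real w \<le> log (real q) (real (card F)) / real w"
    using w by (simp add: divide_right_mono)
  moreover have "(real w - log (real q) (real (V w (2 * d) q))) / real w = 1 - log (real q) (real (V w (2 * d) q)) / real w"
    using w by (simp add: field_simps)
  ultimately show ?thesis using F Fne by auto
qed

lemma singleton_code: "q \<ge> 1 \<Longrightarrow> zero_error_code q w d n {replicate n 0}"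
  unfolding zero_error_code_def using words_replicate by auto

theorem theorem7:
  fixes q w d :: nat
  assumes "w \<ge> 1" and "d \<le> w" and "q \<ge> 2"
  shows "1 - log (real q) (real (V w (2 * d) q)) / real w \<le> C0 q w d
       \<and> C0 q w d \<le> 1 - real d / real w * log (real q) (real q - 1)
       \<and> (real d \<ge> real w / 2 \<longrightarrow> C0 q w d = 0)"
proof -
  have q1: "q \<ge> 1" using assms(3) by simp
  define A where "A = (\<lambda>n. {F. F \<noteq> {} \<and> zero_error_code q w d n F})"
  define f where "f = (\<lambda>n (F::nat list set). log (real q) (real (card F)) / real n)"
  define g where "g = (\<lambda>n. SUP F\<in>A n. f n F)"
  have C0eq: "C0 q w d = (SUP n\<in>{1..}. g n)" unfolding C0_def g_def A_def f_def by simp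
  have Ane: "A n \<noteq> {}" for n
    using singleton_code[OF q1, of w d n] unfolding A_def by auto
  have bddA: "bdd_above (f n ` A n)" if "n \<ge> 1" for n
    unfolding bdd_above_def using val_le_1[OF assms(3) that] unfolding A_def f_def by blast
  have g1: "g n \<le> 1" if "n \<ge> 1" for n
    unfolding g_def by (rule cSUP_least[OF Ane]) (use val_le_1[OF assms(3) that] in \<open>auto simp: A_def f_def\<close>)
  have bddg: "bdd_above (g ` {1..})"
    unfolding bdd_above_def using g1 by auto
  have ne1: "{1::nat..} \<noteq> {}" by auto
  have up: "C0 q w d \<le> 1 - real d / real w * log (real q) (real q - 1)"
    unfolding C0eq
  proof (rule cSUP_least[OF ne1])
    fix n :: nat assume n: "n \<in> {1..}"
    show "g n \<le> 1 - real d / real w * log (real q) (real q - 1)"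
      unfolding g_def
      by (rule cSUP_least[OF Ane]) (use val_upper[OF assms(1,2,3)] n in \<open>auto simp: A_def f_def\<close>)
  qed
  have low: "1 - log (real q) (real (V w (2 * d) q)) / real w \<le> C0 q w d"
  proof -
    obtain F where F: "zero_error_code q w d w F" "F \<noteq> {}"
      and le: "1 - log (real q) (real (V w (2 * d) q)) / real w \<le> f w F"
      using val_lower[OF assms(3,1), of d] unfolding f_def by blast
    have "f w F \<le> g w" unfolding g_def
      by (rule cSUP_upper[OF _ bddA[OF assms(1)]]) (use F in \<open>simp add: A_def\<close>)
    also have "g w \<le> (SUP n\<in>{1..}. g n)"
      by (rule cSUP_upper[OF _ bddg]) (use assms(1) in simp)
    finally show ?thesis using le C0eq by simp
  qed
  have zero: "C0 q w d = 0" if hd: "real d \<ge> real w / 2"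
  proof -
    have wd: "w \<le> 2 * d" using hd by linarith
    have "g n = 0" if "n \<ge> 1" for n
    proof -
      have "f n F = 0" if "F \<in> A n" for F
      proof -
        have F: "zero_error_code q w d n F" "F \<noteq> {}" using that unfolding A_def by auto
        have "card F \<le> 1" by (rule code_trivial[OF assms(1,2) wd q1 F(1)])
        moreover have "1 \<le> card F" using code_basic[OF F] by auto
        ultimately have "card F = 1" by simp
        then show ?thesis unfolding f_def by simp
      qed
      then have "g n = (SUP F\<in>A n. (0::real))" unfolding g_def by (intro SUP_cong) auto
      also have "\<dots> = 0" by (rule cSUP_const[OF Ane])
      finally show ?thesis .
    qed
    then have "(SUP n\<in>{1..}. g n) = (SUP n\<in>{1::nat..}. (0::real))" by (intro SUP_cong) auto
    also have "\<dots> = 0" by (rule cSUP_const[OF ne1])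
    finally show ?thesis using C0eq by simp
  qed
  show ?thesis using low up zero by blast
qed

end
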